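(* Let $m\ge1$ and $0<h<2^m$. Then the sets $\mathbb{V}_k(h)$, $k\in\mathbb{Z}^m$, are pairwise disjoint; $\mathbb{V}(h)=\bigcup_{k\in\mathbb{Z}^m}\mathbb{V}_k(h)$; $\mathbb{V}_0(h)$ is compact; $\mathbb{V}_0(h)$ is strictly convex; and $\mathbb{V}_0(h)$ has nonempty interior in $\mathbb{R}^m$. Moreover, $\mathbb{V}_0(h)=\mathbb{V}(h)\cap(0,2\pi)^m$.
   Context: $s(t)=2\sin(t/2)$. For $h\ge0$, $\mathbb{V}(h)=\{x\in\mathbb{R}^m:|\prod_{j=1}^m s(x_j)|\ge h\}$, $\mathbb{V}_0(h)=\mathbb{V}(h)\cap[0,2\pi]^m$, and for $k\in\mathbb{Z}^m$, $\mathbb{V}_k(h)=\mathbb{V}_0(h)+2\pi k=\{x+2\pi k:x\in\mathbb{V}_0(h)\}$. A set is strictly convex if for any two distinct points of it, their midpoint (indeed every point of the open segment between them) is an interior point of the set. *)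

theory Defs
  imports "HOL-Analysis.Analysis"
begin

definition s_fun :: "real \<Rightarrow> real" where
  "s_fun t = 2 * sin (t / 2)"

text \<open>Points of R^m are modelled as real^'n with CARD('n) = m.\<close>

definition VV :: "real \<Rightarrow> (real ^ 'n::finite) set" where
  "VV h = {x. \<bar>\<Prod>j\<in>UNIV. s_fun (x $ j)\<bar> \<ge> h}"

definition VV0 :: "real \<Rightarrow> (real ^ 'n::finite) set" where
  "VV0 h = VV h \<inter> {x. \<forall>j. 0 \<le> x $ j \<and> x $ j \<le> 2 * pi}"

definition VVk :: "real \<Rightarrow> int ^ 'n \<Rightarrow> (real ^ 'n::finite) set" where
  "VVk h k = (\<lambda>x. x + (\<chi> j. 2 * pi * of_int (k $ j))) ` VV0 h"

definition strictly_convex :: "'a::real_normed_vector set \<Rightarrow> bool" where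
  "strictly_convex S \<longleftrightarrow>
     (\<forall>x\<in>S. \<forall>y\<in>S. x \<noteq> y \<longrightarrow> open_segment x y \<subseteq> interior S)"

end

theory Submission
  imports Defs
begin

lemma s_pos: "0 < t \<Longrightarrow> t < 2*pi \<Longrightarrow> 0 < s_fun t"
  unfolding s_fun_def by (intro mult_pos_pos sin_gt_zero) auto

lemma s_nonneg: "0 \<le> t \<Longrightarrow> t \<le> 2*pi \<Longrightarrow> 0 \<le> s_fun t"
  unfolding s_fun_def by (intro mult_nonneg_nonneg sin_ge_zero) auto

lemma s_ends: "s_fun 0 = 0" "s_fun (2*pi) = 0"
  unfolding s_fun_def by auto

lemma s_period: "\<bar>s_fun (t + 2*pi* of_int k)\<bar> = \<bar>s_fun t\<bar>"
proof -
  have "(t + 2*pi* of_int k)/2 = t/2 + pi * of_int k" by (simp add: field_simps)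
  then show ?thesis unfolding s_fun_def by (simp only: sin_add) (simp add: abs_mult)
qed

lemma s_mid:
  assumes "0 < a" "a < 2*pi" "0 < b" "b < 2*pi" "a \<noteq> b"
  shows "s_fun a * s_fun b < (s_fun ((a+b)/2))^2"
proof -
  define c where "c = (a+b)/4"
  define d where "d = (a-b)/4"
  have ab: "a/2 = c + d" "b/2 = c - d" "(a+b)/2/2 = c" unfolding c_def d_def by (auto simp: field_simps)
  have "sin (c+d) * sin (c-d) = (sin c)^2 - (sin d)^2"
  proof -
    have e1: "cos c * cos c = 1 - sin c * sin c" "cos d * cos d = 1 - sin d * sin d"
      using sin_cos_squared_add[of c] sin_cos_squared_add[of d] by (auto simp: power2_eq_square)
    have "sin (c+d) * sin (c-d) = sin c * sin c * (cos d * cos d) - (cos c * cos c) * (sin d * sin d)"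
      unfolding sin_add sin_diff by (simp add: algebra_simps)
    also have "\<dots> = sin c * sin c * (1 - sin d * sin d) - (1 - sin c * sin c) * (sin d * sin d)"
      by (simp only: e1)
    also have "\<dots> = (sin c)^2 - (sin d)^2" by (simp add: algebra_simps power2_eq_square)
    finally show ?thesis .
  qed
  moreover have "sin d \<noteq> 0"
  proof -
    have *: "-pi < d" "d < pi" "d \<noteq> 0" using assms unfolding d_def by auto
    show ?thesis
    proof (cases "d > 0")
      case True
      then show ?thesis using sin_gt_zero[of d] \<open>d < pi\<close> by simp
    next
      case False
      then have "0 < -d" "-d < pi" using \<open>d \<noteq> 0\<close> \<open>-pi < d\<close> by auto
      then show ?thesis using sin_gt_zero[of "-d"] by auto
    qed
  qed
  then have "0 < (sin d)^2" by simp
  ultimately have "sin (c+d) * sin (c-d) < (sin c)^2" by linarith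
  then have "s_fun a * s_fun b < 4 * (sin c)^2" unfolding s_fun_def ab by simp
  then show ?thesis unfolding s_fun_def ab by (simp add: power_mult_distrib)
qed

lemma s_conv: "convex_on {0<..<2*pi} (\<lambda>t. - ln (s_fun t))"
proof (rule convex_on_realI[where f' = "\<lambda>t. - (cos (t/2) / (2 * sin (t/2)))"])
  show "connected {0<..<2*pi}" by simp
next
  fix x :: real assume x: "x \<in> {0<..<2*pi}"
  then have "sin (x/2) > 0" by (intro sin_gt_zero) auto
  then show "((\<lambda>t. - ln (s_fun t)) has_real_derivative - (cos (x/2) / (2 * sin (x/2)))) (at x)"
    unfolding s_fun_def
    by (auto intro!: derivative_eq_intros simp: field_simps)
next
  fix x y :: real assume x: "x \<in> {0<..<2*pi}" and y: "y \<in> {0<..<2*pi}" and xy: "x \<le> y"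
  have sx: "sin (x/2) > 0" "sin (y/2) > 0" using x y by (auto intro!: sin_gt_zero)
  have "sin (y/2 - x/2) \<ge> 0" using x y xy by (intro sin_ge_zero) auto
  then have "cos (y/2) * sin (x/2) \<le> cos (x/2) * sin (y/2)"
    unfolding sin_diff by (simp add: algebra_simps)
  then show "- (cos (x/2) / (2 * sin (x/2))) \<le> - (cos (y/2) / (2 * sin (y/2)))"
    using sx by (simp add: field_simps)
qed


lemma F_cont: "continuous_on UNIV (\<lambda>w::real^'n::finite. \<bar>\<Prod>j\<in>UNIV. s_fun (w$j)\<bar>)"
  unfolding s_fun_def by (intro continuous_intros) auto

lemma V0_B:
  assumes "0 < h" "x \<in> VV0 h"
  shows "0 < x$j \<and> x$j < 2*pi"
proof -
  have h: "h \<le> \<bar>\<Prod>j\<in>UNIV. s_fun (x$j)\<bar>" and b: "\<forall>j. 0 \<le> x$j \<and> x$j \<le> 2*pi"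
    using assms unfolding VV0_def VV_def by auto
  have "s_fun (x$j) \<noteq> 0"
  proof
    assume "s_fun (x$j) = 0"
    then have "(\<Prod>j\<in>UNIV. s_fun (x$j)) = 0" by (intro prod_zero) auto
    then have "\<bar>\<Prod>j\<in>UNIV. s_fun (x$j)\<bar> = 0" by (simp only: abs_zero)
    then show False using h assms by linarith
  qed
  then have "x$j \<noteq> 0" "x$j \<noteq> 2*pi" using s_ends by auto
  then show ?thesis using b by (auto simp: less_le)
qed

lemma B_ln:
  assumes "\<forall>j. 0 < x$j \<and> x$j < 2*pi" "0 < h"
  shows "h \<le> \<bar>\<Prod>j\<in>UNIV. s_fun (x$j)\<bar> \<longleftrightarrow> ln h \<le> (\<Sum>j\<in>UNIV. ln (s_fun (x$j)))"
    and "h < \<bar>\<Prod>j\<in>UNIV. s_fun (x$j)\<bar> \<longleftrightarrow> ln h < (\<Sum>j\<in>UNIV. ln (s_fun (x$j)))"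
proof -
  have pos: "0 < s_fun (x$j)" for j using assms s_pos by auto
  then have P: "0 < (\<Prod>j\<in>UNIV. s_fun (x$j))" by (intro prod_pos) auto
  have L: "ln (\<Prod>j\<in>UNIV. s_fun (x$j)) = (\<Sum>j\<in>UNIV. ln (s_fun (x$j)))"
    using pos by (intro ln_prod) (auto simp: less_le)
  show "h \<le> \<bar>\<Prod>j\<in>UNIV. s_fun (x$j)\<bar> \<longleftrightarrow> ln h \<le> (\<Sum>j\<in>UNIV. ln (s_fun (x$j)))"
    using P assms(2) L ln_le_cancel_iff[of h "\<Prod>j\<in>UNIV. s_fun (x$j)"] by simp
  show "h < \<bar>\<Prod>j\<in>UNIV. s_fun (x$j)\<bar> \<longleftrightarrow> ln h < (\<Sum>j\<in>UNIV. ln (s_fun (x$j)))"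
    using P assms(2) L ln_less_cancel_iff[of h "\<Prod>j\<in>UNIV. s_fun (x$j)"] by simp
qed

lemma V0_iff:
  assumes "0 < h"
  shows "x \<in> VV0 h \<longleftrightarrow> (\<forall>j. 0 < x$j \<and> x$j < 2*pi) \<and> ln h \<le> (\<Sum>j\<in>UNIV. ln (s_fun (x$j)))"
proof
  assume x: "x \<in> VV0 h"
  then have B: "\<forall>j. 0 < x$j \<and> x$j < 2*pi" using V0_B assms by blast
  moreover have "h \<le> \<bar>\<Prod>j\<in>UNIV. s_fun (x$j)\<bar>" using x unfolding VV0_def VV_def by auto
  ultimately show "(\<forall>j. 0 < x$j \<and> x$j < 2*pi) \<and> ln h \<le> (\<Sum>j\<in>UNIV. ln (s_fun (x$j)))"
    using B_ln(1)[OF B assms] by auto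
next
  assume "(\<forall>j. 0 < x$j \<and> x$j < 2*pi) \<and> ln h \<le> (\<Sum>j\<in>UNIV. ln (s_fun (x$j)))"
  then show "x \<in> VV0 h" using B_ln(1)[of x h] assms unfolding VV0_def VV_def by (auto simp: less_imp_le)
qed

lemma V0_convex:
  assumes "0 < h" "x \<in> VV0 h" "y \<in> VV0 h" "0 \<le> u" "u \<le> 1"
  shows "(1 - u) *\<^sub>R x + u *\<^sub>R y \<in> VV0 h"
proof -
  let ?z = "(1 - u) *\<^sub>R x + u *\<^sub>R y"
  have x: "\<forall>j. 0 < x$j \<and> x$j < 2*pi" "ln h \<le> (\<Sum>j\<in>UNIV. ln (s_fun (x$j)))"
    and y: "\<forall>j. 0 < y$j \<and> y$j < 2*pi" "ln h \<le> (\<Sum>j\<in>UNIV. ln (s_fun (y$j)))"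
    using assms V0_iff by blast+
  have zj: "?z$j = (1-u) * x$j + u * y$j" for j by simp
  have zB: "0 < ?z$j \<and> ?z$j < 2*pi" for j
  proof -
    have a: "0 < x$j" "x$j < 2*pi" "0 < y$j" "y$j < 2*pi" using x y by auto
    have "0 \<le> 1 - u" using assms by simp
    have "(1-u) * x$j + u * y$j > 0"
    proof (cases "u = 0")
      case True then show ?thesis using a by simp
    next
      case False then have "u > 0" using assms by simp
      then show ?thesis using a \<open>0 \<le> 1 - u\<close> by (intro add_nonneg_pos) (auto)
    qed
    moreover have "(1-u) * x$j + u * y$j < 2*pi"
    proof -
      have "(1-u) * x$j \<le> (1-u) * (2*pi)" "u * y$j \<le> u * (2*pi)"
        using a \<open>0 \<le> 1 - u\<close> assms(4) by (auto intro!: mult_left_mono)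
      moreover have "(1-u) * x$j < (1-u) * (2*pi) \<or> u * y$j < u * (2*pi)"
      proof (cases "u = 1")
        case True then show ?thesis using a by simp
      next
        case False then have "0 < 1 - u" using assms(5) by simp
        then show ?thesis using a(2) by (intro disjI1 mult_strict_left_mono) auto
      qed
      ultimately show ?thesis by (auto simp: algebra_simps)
    qed
    ultimately show ?thesis by (simp only: zj)
  qed
  have "- ln (s_fun (?z$j)) \<le> (1-u) * (- ln (s_fun (x$j))) + u * (- ln (s_fun (y$j)))" for j
    using convex_onD[OF s_conv, of u "x$j" "y$j"] x y assms(4,5) by (simp add: zj)
  then have "(\<Sum>j\<in>UNIV. - ln (s_fun (?z$j))) \<le> (\<Sum>j\<in>UNIV. (1-u) * (- ln (s_fun (x$j))) + u * (- ln (s_fun (y$j))))"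
    by (intro sum_mono) auto
  also have "\<dots> = - ((1-u) * (\<Sum>j\<in>UNIV. ln (s_fun (x$j))) + u * (\<Sum>j\<in>UNIV. ln (s_fun (y$j))))"
    by (simp add: sum.distrib sum_distrib_left sum_negf sum_subtractf)
  also have "\<dots> \<le> - ((1-u) * ln h + u * ln h)"
  proof -
    have "(1-u) * ln h \<le> (1-u) * (\<Sum>j\<in>UNIV. ln (s_fun (x$j)))"
      using x(2) assms(5) by (intro mult_left_mono) auto
    moreover have "u * ln h \<le> u * (\<Sum>j\<in>UNIV. ln (s_fun (y$j)))"
      using y(2) assms(4) by (intro mult_left_mono) auto
    ultimately show ?thesis by linarith
  qed
  finally have "ln h \<le> (\<Sum>j\<in>UNIV. ln (s_fun (?z$j)))" by (simp add: sum_negf algebra_simps)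
  then show ?thesis using V0_iff[OF assms(1)] zB by blast
qed


lemma V0_mid:
  assumes "0 < h" "x \<in> VV0 h" "y \<in> VV0 h" "x \<noteq> y"
  shows "(1/2) *\<^sub>R (x + y) \<in> {w. h < \<bar>\<Prod>j\<in>UNIV. s_fun (w$j)\<bar>} \<inter> {w. \<forall>j. 0 < w$j \<and> w$j < 2*pi}"
proof -
  let ?z = "(1/2) *\<^sub>R (x + y)"
  have "?z = (1 - 1/2) *\<^sub>R x + (1/2) *\<^sub>R y" by (simp add: vec_eq_iff field_simps)
  then have "?z \<in> VV0 h" using V0_convex[OF assms(1-3), of "1/2"] by simp
  then have zB: "\<forall>j. 0 < ?z$j \<and> ?z$j < 2*pi" using V0_B assms(1) by blast
  have x: "\<forall>j. 0 < x$j \<and> x$j < 2*pi" "ln h \<le> (\<Sum>j\<in>UNIV. ln (s_fun (x$j)))"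
    and y: "\<forall>j. 0 < y$j \<and> y$j < 2*pi" "ln h \<le> (\<Sum>j\<in>UNIV. ln (s_fun (y$j)))"
    using assms V0_iff by blast+
  have zj: "?z$j = (x$j + y$j)/2" for j by simp
  have key: "ln (s_fun (x$j)) + ln (s_fun (y$j)) \<le> 2 * ln (s_fun (?z$j))
     \<and> (x$j \<noteq> y$j \<longrightarrow> ln (s_fun (x$j)) + ln (s_fun (y$j)) < 2 * ln (s_fun (?z$j)))" for j
  proof (cases "x$j = y$j")
    case True
    then show ?thesis by (simp add: zj)
  next
    case False
    have a: "0 < x$j" "x$j < 2*pi" "0 < y$j" "y$j < 2*pi" using x y by auto
    have p: "0 < s_fun (x$j)" "0 < s_fun (y$j)" "0 < s_fun (?z$j)" using a zB s_pos by auto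
    have "s_fun (x$j) * s_fun (y$j) < (s_fun (?z$j))^2" using s_mid[OF a False] by (simp add: zj)
    then have "ln (s_fun (x$j) * s_fun (y$j)) < ln ((s_fun (?z$j))^2)"
      using p by (subst ln_less_cancel_iff) auto
    then have "ln (s_fun (x$j)) + ln (s_fun (y$j)) < 2 * ln (s_fun (?z$j))"
      using p by (simp add: ln_mult ln_realpow)
    then show ?thesis using False by simp
  qed
  obtain j0 where "x$j0 \<noteq> y$j0" using assms(4) by (auto simp: vec_eq_iff)
  have "(\<Sum>j\<in>UNIV. ln (s_fun (x$j)) + ln (s_fun (y$j))) < (\<Sum>j\<in>UNIV. 2 * ln (s_fun (?z$j)))"
    using key \<open>x$j0 \<noteq> y$j0\<close> by (intro sum_strict_mono_ex1) auto
  then have "ln h < (\<Sum>j\<in>UNIV. ln (s_fun (?z$j)))"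
    using x(2) y(2) by (simp add: sum.distrib sum_distrib_left[symmetric])
  then show ?thesis using B_ln(2)[OF zB assms(1)] zB by auto
qed

lemma Fshift:
  "\<bar>\<Prod>j\<in>UNIV. s_fun ((y + (\<chi> j. 2 * pi * of_int (k $ j)))$j)\<bar> = \<bar>\<Prod>j\<in>UNIV. s_fun (y$j)\<bar>"
  by (simp add: abs_prod s_period)


theorem lemma5:
  fixes h :: real
  assumes "0 < h" and "h < 2 ^ CARD('n::finite)"
  shows "(\<forall>k k'::int ^ 'n. k \<noteq> k' \<longrightarrow> VVk h k \<inter> VVk h k' = {})
    \<and> (VV h :: (real ^ 'n) set) = (\<Union>k::int ^ 'n. VVk h k)
    \<and> compact (VV0 h :: (real ^ 'n) set)
    \<and> strictly_convex (VV0 h :: (real ^ 'n) set)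
    \<and> interior (VV0 h :: (real ^ 'n) set) \<noteq> {}
    \<and> (VV0 h :: (real ^ 'n) set) = VV h \<inter> {x. \<forall>j. 0 < x $ j \<and> x $ j < 2 * pi}"
proof (intro conjI)
  define Oset where "Oset = {w::real^'n. h < \<bar>\<Prod>j\<in>UNIV. s_fun (w$j)\<bar>} \<inter> {w. \<forall>j. 0 < w$j \<and> w$j < 2*pi}"
  have Bbox: "{w::real^'n. \<forall>j. 0 < w$j \<and> w$j < 2*pi} = box 0 (\<chi> j. 2*pi)"
    by (auto simp: mem_box_cart)
  have openO: "open Oset" unfolding Oset_def Bbox
    by (intro open_Int open_box open_Collect_less continuous_on_const F_cont)
  have OV0: "Oset \<subseteq> VV0 h" unfolding Oset_def VV0_def VV_def by (auto simp: less_imp_le)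
  then have Oint: "Oset \<subseteq> interior (VV0 h)" using openO by (rule interior_maximal)
  show "\<forall>k k'::int ^ 'n. k \<noteq> k' \<longrightarrow> VVk h k \<inter> VVk h k' = {}"
  proof (intro allI impI)
    fix k k' :: "int^'n" assume kk: "k \<noteq> k'"
    show "VVk h k \<inter> VVk h k' = {}"
    proof (rule ccontr)
      assume "VVk h k \<inter> VVk h k' \<noteq> {}"
      then obtain x y where x: "x \<in> VV0 h" and y: "y \<in> VV0 h"
        and eq: "x + (\<chi> j. 2 * pi * of_int (k $ j)) = y + (\<chi> j. 2 * pi * of_int (k' $ j))"
        unfolding VVk_def by auto
      have "k$j = k'$j" for j
      proof -
        have a: "0 < x$j" "x$j < 2*pi" "0 < y$j" "y$j < 2*pi" using V0_B assms(1) x y by blast+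
        have e: "of_int (k$j - k'$j) * (2*pi) = y$j - x$j"
          using arg_cong[OF eq, of "\<lambda>v. v$j"] by (simp add: algebra_simps)
        show ?thesis
        proof (rule ccontr)
          assume "k$j \<noteq> k'$j"
          then have "k$j - k'$j \<ge> 1 \<or> k$j - k'$j \<le> -1" by linarith
          then show False
          proof
            assume "k$j - k'$j \<ge> 1"
            then have "of_int (k$j - k'$j) * (2*pi) \<ge> 1 * (2*pi)"
              by (intro mult_right_mono) auto
            then show False using e a by linarith
          next
            assume "k$j - k'$j \<le> -1"
            then have "of_int (k$j - k'$j) * (2*pi) \<le> (-1) * (2*pi)"
              by (intro mult_right_mono) auto
            then show False using e a by linarith
          qed
        qed
      qed
      then show False using kk by (auto simp: vec_eq_iff)
    qed
  qed
  show "(VV h :: (real ^ 'n) set) = (\<Union>k::int ^ 'n. VVk h k)"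
  proof
    show "VV h \<subseteq> (\<Union>k::int ^ 'n. VVk h k)"
    proof
      fix x :: "real^'n" assume x: "x \<in> VV h"
      define k where "k = (\<chi> j. \<lfloor>x$j / (2*pi)\<rfloor>)"
      define c where "c = (\<chi> j. 2 * pi * of_int (k $ j))"
      define y where "y = x - c"
      have yj: "y$j = 2*pi * frac (x$j / (2*pi))" for j
        unfolding y_def c_def k_def frac_def by (simp add: algebra_simps)
      have yb: "0 \<le> y$j \<and> y$j \<le> 2*pi" for j
        unfolding yj using frac_ge_0[of "x$j / (2*pi)"] frac_lt_1[of "x$j / (2*pi)"] by auto
      have xy: "x = y + c" unfolding y_def by simp
      have "\<bar>\<Prod>j\<in>UNIV. s_fun (x$j)\<bar> = \<bar>\<Prod>j\<in>UNIV. s_fun (y$j)\<bar>"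
        unfolding xy c_def by (rule Fshift)
      then have "y \<in> VV0 h" using x yb unfolding VV0_def VV_def by auto
      then have "x \<in> VVk h k" unfolding VVk_def using xy c_def by auto
      then show "x \<in> (\<Union>k::int ^ 'n. VVk h k)" by blast
    qed
    show "(\<Union>k::int ^ 'n. VVk h k) \<subseteq> VV h"
    proof
      fix x assume "x \<in> (\<Union>k::int ^ 'n. VVk h k)"
      then obtain k y where y: "y \<in> VV0 h" and xy: "x = y + (\<chi> j. 2 * pi * of_int (k $ j))"
        unfolding VVk_def by auto
      have "\<bar>\<Prod>j\<in>UNIV. s_fun (x$j)\<bar> = \<bar>\<Prod>j\<in>UNIV. s_fun (y$j)\<bar>"
        unfolding xy by (rule Fshift)
      then show "x \<in> VV h" using y unfolding VV0_def VV_def by auto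
    qed
  qed
  show "compact (VV0 h :: (real ^ 'n) set)"
  proof -
    have "VV0 h = cbox 0 (\<chi> j. 2*pi) \<inter> (VV h :: (real^'n) set)"
      unfolding VV0_def by (auto simp: mem_box_cart)
    moreover have "closed (VV h :: (real^'n) set)"
      unfolding VV_def by (intro closed_Collect_le continuous_on_const F_cont)
    ultimately show ?thesis by (simp add: compact_Int_closed)
  qed
  show "strictly_convex (VV0 h :: (real ^ 'n) set)"
    unfolding strictly_convex_def
  proof (intro ballI impI subsetI)
    fix x y z :: "real^'n"
    assume x: "x \<in> VV0 h" and y: "y \<in> VV0 h" and xy: "x \<noteq> y" and z: "z \<in> open_segment x y"
    obtain u where u: "0 < u" "u < 1" and zu: "z = (1 - u) *\<^sub>R x + u *\<^sub>R y"
      using z unfolding in_segment by blast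
    obtain j0 where j0: "x$j0 \<noteq> y$j0" using xy by (auto simp: vec_eq_iff)
    show "z \<in> interior (VV0 h)"
    proof (cases "u \<le> 1/2")
      case True
      define y' where "y' = (1 - 2*u) *\<^sub>R x + (2*u) *\<^sub>R y"
      have y': "y' \<in> VV0 h" unfolding y'_def using V0_convex[OF assms(1) x y, of "2*u"] u True by auto
      have "y'$j0 \<noteq> x$j0"
      proof
        assume "y'$j0 = x$j0"
        then have "(2*u) * (y$j0 - x$j0) = 0" unfolding y'_def by (simp add: algebra_simps)
        then show False using u j0 by simp
      qed
      then have "x \<noteq> y'" by auto
      have "z = (1/2) *\<^sub>R (x + y')" unfolding zu y'_def by (simp add: vec_eq_iff field_simps)
      then have "z \<in> Oset" using V0_mid[OF assms(1) x y' \<open>x \<noteq> y'\<close>] unfolding Oset_def by simp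
      then show ?thesis using Oint by auto
    next
      case False
      define x' where "x' = (1 - (2*u - 1)) *\<^sub>R x + (2*u - 1) *\<^sub>R y"
      have x': "x' \<in> VV0 h" unfolding x'_def using V0_convex[OF assms(1) x y, of "2*u - 1"] u False by auto
      have "x'$j0 \<noteq> y$j0"
      proof
        assume "x'$j0 = y$j0"
        then have "(2 - 2*u) * (x$j0 - y$j0) = 0" unfolding x'_def by (simp add: algebra_simps)
        then show False using u j0 by simp
      qed
      then have "x' \<noteq> y" by auto
      have "z = (1/2) *\<^sub>R (x' + y)" unfolding zu x'_def by (simp add: vec_eq_iff field_simps)
      then have "z \<in> Oset" using V0_mid[OF assms(1) x' y \<open>x' \<noteq> y\<close>] unfolding Oset_def by simp
      then show ?thesis using Oint by auto
    qed
  qed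
  show "interior (VV0 h :: (real ^ 'n) set) \<noteq> {}"
  proof -
    let ?p = "(\<chi> j. pi) :: real^'n"
    have "(\<Prod>j\<in>UNIV. s_fun (?p$j)) = 2 ^ CARD('n)" by (simp add: s_fun_def)
    then have "?p \<in> Oset" unfolding Oset_def using assms(2) by auto
    then show ?thesis using Oint by auto
  qed
  show "(VV0 h :: (real ^ 'n) set) = VV h \<inter> {x. \<forall>j. 0 < x $ j \<and> x $ j < 2 * pi}"
  proof
    show "(VV0 h :: (real^'n) set) \<subseteq> VV h \<inter> {x. \<forall>j. 0 < x $ j \<and> x $ j < 2 * pi}"
    proof
      fix x :: "real^'n" assume x: "x \<in> VV0 h"
      then have "\<forall>j. 0 < x $ j \<and> x $ j < 2 * pi" using V0_B[OF assms(1)] by blast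
      moreover have "x \<in> VV h" using x unfolding VV0_def by blast
      ultimately show "x \<in> VV h \<inter> {x. \<forall>j. 0 < x $ j \<and> x $ j < 2 * pi}" by blast
    qed
    show "(VV h :: (real^'n) set) \<inter> {x. \<forall>j. 0 < x $ j \<and> x $ j < 2 * pi} \<subseteq> VV0 h"
      unfolding VV0_def by (auto simp: less_imp_le)
  qed
qed

end
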